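(* Let $k\ge2$ be an integer, let $g$ be the function (defined in the context) associated with a feasible solution $\bar\pi$, with $\bar\pi_1\ge\dots\ge\bar\pi_p$, of the dual fractional bin packing LP of some 1D bin packing instance with distinct sizes $s_1>\dots>s_p$ in $(0,1]$. For any finite list $L$ of boxes in $[0,1]^3$, writing $W(L)=\sum_{R\in L} f_k(l(R))\,g(w(R))\,h(R)$, we have $W(L)\le T_k\cdot OPT(L)$.
   Context: 3D strip packing: boxes $R=(l(R),w(R),h(R))$ (length, width, height), all sides at most 1, packed orthogonally without rotation or overlap into a strip of length 1, width 1 and unlimited height; $OPT(L)$ is the minimum height needed. Weighting function: $f_k(x)=\frac1t$ if $\frac1{t+1}<x\le\frac1t$ with $1\le t<k$, $f_k(x)=\frac{kx}{k-1}$ if $0<x\le\frac1k$, and $f_k(0)=0$. Let $t_1=1$, $t_{i+1}=t_i(t_i+1)$, $m(k)$ the integer with $t_{m(k)}<k\le t_{m(k)+1}$, and $T_k=\sum_{i=1}^{m(k)}\frac1{t_i}+\frac1{t_{m(k)+1}}\cdot\frac{k}{k-1}$. Dual fractional bin packing LP: for sizes $s_1>\dots>s_p$ with multiplicities $n_j$, a feasible pattern is a nonnegative integer vector $v$ with $\sum_j v_js_j\le1$; the dual is: maximize $\sum_jn_j\pi_j$ s.t. $\sum_jv_j\pi_j\le1$ for all feasible patterns $v$, $\pi\ge0$. Given such a feasible $\bar\pi$ with $\bar\pi_1\ge\dots\ge\bar\pi_p$, set $\bar\pi_{p+1}=0$, $s_0=1$, $s_{p+1}=0$ and $g(0)=0$,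 $g(x)=\bar\pi_j$ for $x\in[s_j,s_{j-1})$, and $g(1)=\bar\pi_1$. *)

theory Defs
  imports Complex_Main
begin

type_synonym box = "real \<times> real \<times> real"

definition blen :: "box \<Rightarrow> real" where "blen R = fst R"
definition bwid :: "box \<Rightarrow> real" where "bwid R = fst (snd R)"
definition bhgt :: "box \<Rightarrow> real" where "bhgt R = snd (snd R)"

text \<open>A placement assigns to the i-th box of L its corner (x,y,z).
  It is a packing into the strip [0,1] x [0,1] x [0,inf) if every box lies in the
  strip and interiors of distinct boxes are disjoint (no rotation).\<close>
definition is_packing :: "box list \<Rightarrow> (nat \<Rightarrow> real \<times> real \<times> real) \<Rightarrow> bool" where
  "is_packing L pos \<longleftrightarrow>
     (\<forall>i<length L. 0 \<le> fst (pos i) \<and> fst (pos i) + blen (L!i) \<le> 1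
        \<and> 0 \<le> fst (snd (pos i)) \<and> fst (snd (pos i)) + bwid (L!i) \<le> 1
        \<and> 0 \<le> snd (snd (pos i))) \<and>
     (\<forall>i<length L. \<forall>j<length L. i \<noteq> j \<longrightarrow>
        fst (pos i) + blen (L!i) \<le> fst (pos j) \<or> fst (pos j) + blen (L!j) \<le> fst (pos i) \<or>
        fst (snd (pos i)) + bwid (L!i) \<le> fst (snd (pos j)) \<or>
        fst (snd (pos j)) + bwid (L!j) \<le> fst (snd (pos i)) \<or>
        snd (snd (pos i)) + bhgt (L!i) \<le> snd (snd (pos j)) \<or>
        snd (snd (pos j)) + bhgt (L!j) \<le> snd (snd (pos i)))"

definition OPT :: "box list \<Rightarrow> real" where
  "OPT L = Inf {H. 0 \<le> H \<and> (\<exists>pos. is_packing L pos \<and>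
                  (\<forall>i<length L. snd (snd (pos i)) + bhgt (L!i) \<le> H))}"

definition fk :: "nat \<Rightarrow> real \<Rightarrow> real" where
  "fk k x = (if x = 0 then 0
             else if x \<le> 1 / real k then real k * x / (real k - 1)
             else 1 / real (THE t::nat. 1 \<le> t \<and> t < k \<and> 1 / real (t+1) < x \<and> x \<le> 1 / real t))"

text \<open>The sequence t_1 = 1, t_(i+1) = t_i (t_i + 1) (1-indexed; index 0 is a dummy).\<close>
fun tseq :: "nat \<Rightarrow> nat" where
  "tseq 0 = 0"
| "tseq (Suc 0) = 1"
| "tseq (Suc (Suc i)) = tseq (Suc i) * (tseq (Suc i) + 1)"

definition mk :: "nat \<Rightarrow> nat" where
  "mk k = (THE m. 1 \<le> m \<and> tseq m < k \<and> k \<le> tseq (m+1))"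

definition Tk :: "nat \<Rightarrow> real" where
  "Tk k = (\<Sum>i=1..mk k. 1 / real (tseq i)) + 1 / real (tseq (mk k + 1)) * (real k / (real k - 1))"

definition dual_feasible :: "nat \<Rightarrow> (nat \<Rightarrow> real) \<Rightarrow> (nat \<Rightarrow> real) \<Rightarrow> bool" where
  "dual_feasible p s \<pi> \<longleftrightarrow>
     (\<forall>j\<in>{1..p}. 0 \<le> \<pi> j) \<and>
     (\<forall>v::nat \<Rightarrow> nat. (\<Sum>j=1..p. real (v j) * s j) \<le> 1 \<longrightarrow> (\<Sum>j=1..p. real (v j) * \<pi> j) \<le> 1)"

definition sext :: "nat \<Rightarrow> (nat \<Rightarrow> real) \<Rightarrow> nat \<Rightarrow> real" where
  "sext p s j = (if j = 0 then 1 else if j \<le> p then s j else 0)"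
definition piext :: "nat \<Rightarrow> (nat \<Rightarrow> real) \<Rightarrow> nat \<Rightarrow> real" where
  "piext p \<pi> j = (if j \<le> p then \<pi> j else 0)"

definition gfun :: "nat \<Rightarrow> (nat \<Rightarrow> real) \<Rightarrow> (nat \<Rightarrow> real) \<Rightarrow> real \<Rightarrow> real" where
  "gfun p s \<pi> x = (if x = 0 then 0 else if x = 1 then \<pi> 1
     else piext p \<pi> (THE j. 1 \<le> j \<and> j \<le> p + 1 \<and> sext p s j \<le> x \<and> x < sext p s (j - 1)))"

definition Wt :: "nat \<Rightarrow> nat \<Rightarrow> (nat \<Rightarrow> real) \<Rightarrow> (nat \<Rightarrow> real) \<Rightarrow> box list \<Rightarrow> real" where
  "Wt k p s \<pi> L = sum_list (map (\<lambda>R. fk k (blen R) * gfun p s \<pi> (bwid R) * bhgt R) L)"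

end

theory Submission
  imports Defs
begin

lemma seg_aux:
  fixes I :: "'i set" and c :: "'i \<Rightarrow> real" and D :: "real \<Rightarrow> real"
  assumes fin: "finite I" and cnn: "\<forall>i\<in>I. 0 \<le> c i"
  shows "\<And>A B a b. card ((a ` I \<union> b ` I) \<inter> {A<..<B}) = n \<Longrightarrow>
     \<forall>i\<in>I. A \<le> a i \<and> a i \<le> b i \<and> b i \<le> B \<Longrightarrow>
     \<forall>x y. A \<le> x \<longrightarrow> x \<le> y \<longrightarrow> y \<le> B \<longrightarrow> D y \<le> D x \<Longrightarrow>
     \<forall>x. A < x \<longrightarrow> x < B \<longrightarrow> (\<Sum>i\<in>{i\<in>I. a i < x \<and> x < b i}. c i) \<le> T \<Longrightarrow>
     A \<le> B \<Longrightarrow>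
     (\<Sum>i\<in>I. c i * (D (a i) - D (b i))) \<le> T * (D A - D B)"
proof (induction n rule: less_induct)
  case (less n A B a b)
  let ?E = "(a ` I \<union> b ` I) \<inter> {A<..<B}"
  have finE: "finite ?E" using fin by auto
  show ?case
  proof (cases "?E = {}")
    case True
    show ?thesis
    proof (cases "A = B")
      case True
      then have "\<forall>i\<in>I. a i = b i" using less.prems(2) by force
      then show ?thesis using True by simp
    next
      case False
      then have AB: "A < B" using less.prems(5) by simp
      define m where "m = (A + B) / 2"
      have m: "A < m" "m < B" using AB unfolding m_def by auto
      have ends: "\<forall>i\<in>I. (a i = A \<or> a i = B) \<and> (b i = A \<or> b i = B)"
      proof
        fix i assume i: "i \<in> I"
        have "a i \<notin> {A<..<B}" "b i \<notin> {A<..<B}" using True i by auto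
        then show "(a i = A \<or> a i = B) \<and> (b i = A \<or> b i = B)"
          using less.prems(2) i by force
      qed
      have "(\<Sum>i\<in>I. c i * (D (a i) - D (b i))) = (\<Sum>i\<in>I. if a i < m \<and> m < b i then c i * (D A - D B) else 0)"
      proof (rule sum.cong)
        fix i assume i: "i \<in> I"
        show "c i * (D (a i) - D (b i)) = (if a i < m \<and> m < b i then c i * (D A - D B) else 0)"
          using ends i m less.prems(2) by (cases "a i = A"; cases "b i = A"; auto)
      qed simp
      also have "\<dots> = (\<Sum>i\<in>{i\<in>I. a i < m \<and> m < b i}. c i) * (D A - D B)"
        by (simp add: sum.If_cases fin sum_distrib_right Int_def conj_commute)
      also have "\<dots> \<le> T * (D A - D B)"
        apply (rule mult_right_mono)
        using less.prems(4) m apply blast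
        using less.prems(3) AB by force
      finally show ?thesis .
    qed
  next
    case False
    then obtain e where e: "e \<in> ?E" by blast
    then have eAB: "A < e" "e < B" by auto
    define a1 where "a1 = (\<lambda>i. min (a i) e)"
    define b1 where "b1 = (\<lambda>i. min (b i) e)"
    define a2 where "a2 = (\<lambda>i. max (a i) e)"
    define b2 where "b2 = (\<lambda>i. max (b i) e)"
    have sub1: "(a1 ` I \<union> b1 ` I) \<inter> {A<..<e} \<subseteq> ?E - {e}"
      unfolding a1_def b1_def using eAB by (auto simp: min_def split: if_splits)
    have sub2: "(a2 ` I \<union> b2 ` I) \<inter> {e<..<B} \<subseteq> ?E - {e}"
      unfolding a2_def b2_def using eAB by (auto simp: max_def split: if_splits)
    have lt1: "card ((a1 ` I \<union> b1 ` I) \<inter> {A<..<e}) < n"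
    proof -
      have "card ((a1 ` I \<union> b1 ` I) \<inter> {A<..<e}) \<le> card (?E - {e})"
        using sub1 finE by (intro card_mono) auto
      also have "\<dots> < card ?E" by (rule card_Diff1_less[OF finE e])
      finally show ?thesis using less.prems(1) by simp
    qed
    have lt2: "card ((a2 ` I \<union> b2 ` I) \<inter> {e<..<B}) < n"
    proof -
      have "card ((a2 ` I \<union> b2 ` I) \<inter> {e<..<B}) \<le> card (?E - {e})"
        using sub2 finE by (intro card_mono) auto
      also have "\<dots> < card ?E" by (rule card_Diff1_less[OF finE e])
      finally show ?thesis using less.prems(1) by simp
    qed
    have IH1: "(\<Sum>i\<in>I. c i * (D (a1 i) - D (b1 i))) \<le> T * (D A - D e)"
    proof (rule less.IH[OF lt1 refl])
      show "\<forall>i\<in>I. A \<le> a1 i \<and> a1 i \<le> b1 i \<and> b1 i \<le> e"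
        using less.prems(2) eAB unfolding a1_def b1_def by auto
      show "\<forall>x y. A \<le> x \<longrightarrow> x \<le> y \<longrightarrow> y \<le> e \<longrightarrow> D y \<le> D x"
        using less.prems(3) eAB by auto
      show "\<forall>x. A < x \<longrightarrow> x < e \<longrightarrow> (\<Sum>i\<in>{i\<in>I. a1 i < x \<and> x < b1 i}. c i) \<le> T"
      proof (intro allI impI)
        fix x assume x: "A < x" "x < e"
        have "{i\<in>I. a1 i < x \<and> x < b1 i} = {i\<in>I. a i < x \<and> x < b i}"
          unfolding a1_def b1_def using x by auto
        then show "(\<Sum>i\<in>{i\<in>I. a1 i < x \<and> x < b1 i}. c i) \<le> T"
          using less.prems(4) x eAB by auto
      qed
      show "A \<le> e" using eAB by simp
    qed
    have IH2: "(\<Sum>i\<in>I. c i * (D (a2 i) - D (b2 i))) \<le> T * (D e - D B)"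
    proof (rule less.IH[OF lt2 refl])
      show "\<forall>i\<in>I. e \<le> a2 i \<and> a2 i \<le> b2 i \<and> b2 i \<le> B"
        using less.prems(2) eAB unfolding a2_def b2_def by auto
      show "\<forall>x y. e \<le> x \<longrightarrow> x \<le> y \<longrightarrow> y \<le> B \<longrightarrow> D y \<le> D x"
        using less.prems(3) eAB by auto
      show "\<forall>x. e < x \<longrightarrow> x < B \<longrightarrow> (\<Sum>i\<in>{i\<in>I. a2 i < x \<and> x < b2 i}. c i) \<le> T"
      proof (intro allI impI)
        fix x assume x: "e < x" "x < B"
        have "{i\<in>I. a2 i < x \<and> x < b2 i} = {i\<in>I. a i < x \<and> x < b i}"
          unfolding a2_def b2_def using x by auto
        then show "(\<Sum>i\<in>{i\<in>I. a2 i < x \<and> x < b2 i}. c i) \<le> T"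
          using less.prems(4) x eAB by auto
      qed
      show "e \<le> B" using eAB by simp
    qed
    have "(\<Sum>i\<in>I. c i * (D (a i) - D (b i))) =
          (\<Sum>i\<in>I. c i * (D (a1 i) - D (b1 i))) + (\<Sum>i\<in>I. c i * (D (a2 i) - D (b2 i)))"
      unfolding sum.distrib[symmetric]
    proof (rule sum.cong)
      fix i assume i: "i \<in> I"
      have "a i \<le> b i" using less.prems(2) i by auto
      then show "c i * (D (a i) - D (b i)) = c i * (D (a1 i) - D (b1 i)) + c i * (D (a2 i) - D (b2 i))"
        unfolding a1_def b1_def a2_def b2_def
        by (cases "b i \<le> e"; cases "a i \<le> e"; simp add: min_def max_def algebra_simps)
    qed simp
    also have "\<dots> \<le> T * (D A - D e) + T * (D e - D B)" using IH1 IH2 by simp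
    also have "\<dots> = T * (D A - D B)" by (simp add: algebra_simps)
    finally show ?thesis .
  qed
qed

lemma seg:
  fixes I :: "'i set" and c :: "'i \<Rightarrow> real" and D :: "real \<Rightarrow> real"
  assumes "finite I" "\<forall>i\<in>I. 0 \<le> c i"
    "\<forall>i\<in>I. A \<le> a i \<and> a i \<le> b i \<and> b i \<le> B"
    "\<forall>x y. A \<le> x \<longrightarrow> x \<le> y \<longrightarrow> y \<le> B \<longrightarrow> D y \<le> D x"
    "\<forall>x. A < x \<longrightarrow> x < B \<longrightarrow> (\<Sum>i\<in>{i\<in>I. a i < x \<and> x < b i}. c i) \<le> T"
    "A \<le> B"
  shows "(\<Sum>i\<in>I. c i * (D (a i) - D (b i))) \<le> T * (D A - D B)"
  using seg_aux[OF assms(1,2) refl assms(3-6)] .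

lemma tseq_Suc: "j \<ge> 1 \<Longrightarrow> tseq (Suc j) = tseq j * (tseq j + 1)"
  by (cases j) auto

lemma tseq_pos: "j \<ge> 1 \<Longrightarrow> tseq j \<ge> 1"
proof (induction j)
  case 0 then show ?case by simp
next
  case (Suc j) then show ?case by (cases j) auto
qed

lemma tseq_step: "tseq n \<le> tseq (Suc n)"
  by (cases n) auto

lemma tseq_mono: "i \<le> j \<Longrightarrow> tseq i \<le> tseq j"
  using tseq_step by (metis lift_Suc_mono_le)

lemma tseq_ge: "tseq j \<ge> j"
proof (induction j)
  case 0 then show ?case by simp
next
  case (Suc j)
  show ?case
  proof (cases j)
    case 0 then show ?thesis by simp
  next
    case (Suc i)
    then have "tseq j \<ge> 1" using tseq_pos by simp
    then have "tseq (Suc j) \<ge> tseq j + 1" using tseq_Suc[of j] Suc by simp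
    then show ?thesis using Suc.IH by simp
  qed
qed

lemma mk_props:
  assumes "k \<ge> 2"
  shows "1 \<le> mk k \<and> tseq (mk k) < k \<and> k \<le> tseq (mk k + 1)"
proof -
  define n where "n = (LEAST n. k \<le> tseq n)"
  have ex: "k \<le> tseq k" using tseq_ge by simp
  have n1: "k \<le> tseq n" unfolding n_def by (rule LeastI[of _ k], rule ex)
  have n0: "n \<noteq> 0" using n1 assms by (cases n) auto
  have n1': "n \<noteq> 1"
  proof
    assume "n = 1" then show False using n1 assms by simp
  qed
  define m where "m = n - 1"
  have m1: "1 \<le> m" using n0 n1' unfolding m_def by simp
  have mlt: "tseq m < k"
  proof (rule ccontr)
    assume "\<not> tseq m < k"
    then have "n \<le> m" unfolding n_def by (intro Least_le) simp
    then show False using n0 unfolding m_def by simp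
  qed
  have mn: "m + 1 = n" using n0 unfolding m_def by simp
  have P: "1 \<le> m \<and> tseq m < k \<and> k \<le> tseq (m + 1)" using m1 mlt n1 mn by simp
  have "mk k = m" unfolding mk_def
  proof (rule the_equality)
    show "1 \<le> m \<and> tseq m < k \<and> k \<le> tseq (m + 1)" by (rule P)
    fix m' assume m': "1 \<le> m' \<and> tseq m' < k \<and> k \<le> tseq (m' + 1)"
    show "m' = m"
    proof (rule ccontr)
      assume "m' \<noteq> m"
      then consider "m' + 1 \<le> m" | "m + 1 \<le> m'" by linarith
      then show False
      proof cases
        case 1 then have "tseq (m'+1) \<le> tseq m" by (rule tseq_mono)
        then show False using m' P by simp
      next
        case 2 then have "tseq (m+1) \<le> tseq m'" by (rule tseq_mono)
        then show False using m' P by simp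
      qed
    qed
  qed
  then show ?thesis using P by simp
qed

lemma fk_zero: "fk k 0 = 0" unfolding fk_def by simp

lemma fk_small: "0 \<le> x \<Longrightarrow> x \<le> 1 / real k \<Longrightarrow> fk k x = real k * x / (real k - 1)"
  unfolding fk_def by auto

lemma fk_class:
  assumes "1 \<le> t" "t < k" "1 / real (t+1) < x" "x \<le> 1 / real t"
  shows "fk k x = 1 / real t"
proof -
  have "1 / real k \<le> 1 / real (t+1)" using assms(1,2)
    by (intro divide_left_mono) auto
  then have nk: "\<not> x \<le> 1 / real k" using assms(3) by linarith
  have "0 < 1 / real (t+1)" by simp
  then have x0: "x \<noteq> 0" using assms(3) by linarith
  have "(THE t::nat. 1 \<le> t \<and> t < k \<and> 1 / real (t+1) < x \<and> x \<le> 1 / real t) = t"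
  proof (rule the_equality)
    show "1 \<le> t \<and> t < k \<and> 1 / real (t+1) < x \<and> x \<le> 1 / real t" using assms by simp
    fix t' assume t': "1 \<le> t' \<and> t' < k \<and> 1 / real (t'+1) < x \<and> x \<le> 1 / real t'"
    show "t' = t"
    proof (rule ccontr)
      assume "t' \<noteq> t"
      then consider "t' + 1 \<le> t" | "t + 1 \<le> t'" by linarith
      then show False
      proof cases
        case 1
        then have "1 / real t \<le> 1 / real (t'+1)" using t' by (intro divide_left_mono) auto
        then show False using t' assms by linarith
      next
        case 2
        then have "1 / real t' \<le> 1 / real (t+1)" using assms by (intro divide_left_mono) auto
        then show False using t' assms by linarith
      qed
    qed
  qed
  then show ?thesis unfolding fk_def using nk x0 by simp
qed

lemma fk_exists_class:
  assumes "k \<ge> 2" "1 / real k < x" "x \<le> 1"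
  shows "\<exists>t. 1 \<le> t \<and> t < k \<and> 1 / real (t+1) < x \<and> x \<le> 1 / real t"
proof -
  have kpos: "real k > 0" using assms(1) by simp
  have "0 < 1 / real k" using kpos by simp
  then have xpos: "x > 0" using assms(2) by linarith
  define t where "t = nat \<lfloor>1 / x\<rfloor>"
  have ge1: "1 / x \<ge> 1" using xpos assms(3) by simp
  have "1 < x * real k" using assms(2) kpos by (simp add: divide_less_eq)
  then have ltk: "1 / x < real k" using xpos by (simp add: divide_less_eq mult.commute)
  have t1: "real t \<le> 1 / x" "1 / x < real t + 1" unfolding t_def using ge1 by linarith+
  have tge: "1 \<le> t" unfolding t_def using ge1 by linarith
  have tlt: "t < k" using t1 ltk by linarith
  have "1 / real (t+1) < x" using t1 xpos by (simp add: divide_simps mult.commute add.commute)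
  moreover have "x \<le> 1 / real t" using t1 xpos tge by (simp add: divide_simps mult.commute)
  ultimately show ?thesis using tge tlt by blast
qed

lemma fk_nonneg: "k \<ge> 2 \<Longrightarrow> 0 \<le> x \<Longrightarrow> x \<le> 1 \<Longrightarrow> 0 \<le> fk k x"
proof -
  assume a: "k \<ge> 2" "0 \<le> x" "x \<le> 1"
  show ?thesis
  proof (cases "x \<le> 1 / real k")
    case True then show ?thesis using fk_small[OF a(2) True] a by simp
  next
    case False
    then obtain t where t: "1 \<le> t \<and> t < k \<and> 1 / real (t+1) < x \<and> x \<le> 1 / real t"
      using fk_exists_class a by fastforce
    then show ?thesis using fk_class[of t k x] by simp
  qed
qed

lemma fk_ratio:
  assumes "k \<ge> 2" "2 \<le> u" "u < k" "0 \<le> x" "x \<le> 1 / real u"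
  shows "fk k x \<le> (real u + 1) / real u * x"
proof (cases "x \<le> 1 / real k")
  case True
  have "real k / (real k - 1) \<le> (real u + 1) / real u"
  proof -
    have h: "real u + 1 \<le> real k" using assms by simp
    have k1: "real k - 1 > 0" using assms by simp
    have u0: "real u > 0" using assms by simp
    have ku: "real k * real u \<le> (real u + 1) * (real k - 1)" using h by (simp add: algebra_simps)
    have "real k \<le> (real u + 1) * (real k - 1) / real u" using ku u0 by (simp add: pos_le_divide_eq)
    then show ?thesis using k1 by (simp add: pos_divide_le_eq mult.commute)
  qed
  then have "real k / (real k - 1) * x \<le> (real u + 1) / real u * x"
    using assms(4) by (rule mult_right_mono)
  then show ?thesis using fk_small[OF assms(4) True] by simp
next
  case False
  have "1 / real u \<le> 1" using assms(2) by simp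
  then have x1: "x \<le> 1" using assms(5) by linarith
  have "1 / real k < x" using False by simp
  from fk_exists_class[OF assms(1) this x1]
  obtain t where t: "1 \<le> t" "t < k" "1 / real (t+1) < x" "x \<le> 1 / real t" by blast
  have "u < t + 1"
  proof (rule ccontr)
    assume "\<not> u < t + 1"
    then have "1 / real u \<le> 1 / real (t+1)" by (intro divide_left_mono) auto
    then show False using t(3) assms(5) by linarith
  qed
  then have ut: "u \<le> t" by simp
  have "0 < 1 / real (t+1)" by simp
  then have xp: "x > 0" using t(3) by linarith
  have "1 / real t < (real t + 1) / real t * x" using t(1,3) xp
    by (simp add: divide_simps mult.commute add.commute)
  also have "\<dots> \<le> (real u + 1) / real u * x"
    using ut assms(2) xp by (intro mult_right_mono) (simp_all add: divide_simps algebra_simps)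
  finally show ?thesis using fk_class[OF t] by simp
qed

lemma l1: "(r::real) > 0 \<Longrightarrow> (r + 1 + 1) / (r + 1) * (1 / r) = 1 / r + 1 / (r * (r + 1))"
proof -
  assume r: "r > 0"
  have a: "r + 1 \<noteq> 0" "r \<noteq> 0" "r * (r+1) \<noteq> 0" using r by auto
  have "1 / r = (r + 1) / (r * (r + 1))" using a by simp
  then have "1 / r + 1 / (r * (r + 1)) = (r + 1 + 1) / (r * (r + 1))" by (simp add: add_divide_distrib)
  also have "\<dots> = (r + 1 + 1) / (r + 1) * (1 / r)" by (simp add: mult.commute)
  finally show ?thesis by simp
qed
lemma l2: "(r::real) > 0 \<Longrightarrow> (r + 1) / r * (1 / r) = 1 / r + 1 / (r * (r + 1)) * ((r + 1) / r)"
proof -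
  assume r: "r > 0"
  have a: "r + 1 \<noteq> 0" "r \<noteq> 0" using r by auto
  have "1 / (r * (r + 1)) * ((r + 1) / r) = 1 / (r * r)" using a by simp
  moreover have "(r + 1) / r * (1 / r) = (r + 1) / (r * r)" by simp
  moreover have "1 / r = r / (r * r)" using a by simp
  ultimately show ?thesis by (simp add: add_divide_distrib)
qed

definition Bj :: "nat \<Rightarrow> nat \<Rightarrow> real" where
  "Bj k j = (\<Sum>i=j..mk k. 1 / real (tseq i)) + 1 / real (tseq (mk k + 1)) * (real k / (real k - 1))"

lemma Tk_Bj: "Tk k = Bj k 1" unfolding Tk_def Bj_def by simp

lemma Bj_split: "1 \<le> n \<Longrightarrow> n \<le> mk k \<Longrightarrow> Bj k n = 1 / real (tseq n) + Bj k (Suc n)"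
  unfolding Bj_def by (simp add: sum.atLeast_Suc_atMost)

lemma Bj_ge:
  assumes "k \<ge> 2" "1 \<le> j" "j \<le> mk k + 1"
  shows "1 / real (tseq j) \<le> Bj k j"
proof -
  have K: "1 \<le> real k / (real k - 1)" using assms(1) by simp
  have nn: "0 \<le> (\<Sum>i=j..mk k. 1 / real (tseq i))" by (intro sum_nonneg) simp
  show ?thesis
  proof (cases "j \<le> mk k")
    case True
    have "1 / real (tseq j) \<le> (\<Sum>i=j..mk k. 1 / real (tseq i))"
      using True by (intro member_le_sum) (auto simp: tseq_pos)
    moreover have "0 \<le> 1 / real (tseq (mk k + 1)) * (real k / (real k - 1))"
      using assms(1) by simp
    ultimately show ?thesis unfolding Bj_def by linarith
  next
    case False
    then have j: "j = mk k + 1" using assms by simp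
    have "0 \<le> 1 / real (tseq j)" by simp
    from mult_left_mono[OF K this]
    have "1 / real (tseq j) \<le> 1 / real (tseq (mk k + 1)) * (real k / (real k - 1))"
      using j by simp
    then show ?thesis using nn unfolding Bj_def by linarith
  qed
qed

lemma harm_j:
  assumes k2: "k \<ge> 2" and j1: "1 \<le> j" and jm: "j \<le> mk k + 1"
  shows "\<forall>(S::'i set) x. finite S \<longrightarrow> (\<forall>i\<in>S. 0 \<le> x i) \<longrightarrow> (\<Sum>i\<in>S. x i) \<le> 1 / real (tseq j)
          \<longrightarrow> (\<Sum>i\<in>S. fk k (x i)) \<le> Bj k j"
  using jm j1
proof (induction j rule: inc_induct)
  case base
  have mp: "1 \<le> mk k \<and> tseq (mk k) < k \<and> k \<le> tseq (mk k + 1)" using mk_props[OF k2] .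
  show ?case
  proof (intro allI impI)
    fix S :: "'i set" and x assume fin: "finite S" and nn: "\<forall>i\<in>S. 0 \<le> x i"
      and sm: "(\<Sum>i\<in>S. x i) \<le> 1 / real (tseq (mk k + 1))"
    have tk: "1 / real (tseq (mk k + 1)) \<le> 1 / real k"
      using mp k2 by (intro divide_left_mono) auto
    have "\<forall>i\<in>S. fk k (x i) = real k / (real k - 1) * x i"
    proof
      fix i assume i: "i \<in> S"
      have "x i \<le> (\<Sum>i\<in>S. x i)" using fin nn i by (intro member_le_sum) auto
      then have "x i \<le> 1 / real k" using sm tk by linarith
      then show "fk k (x i) = real k / (real k - 1) * x i" using fk_small nn i by simp
    qed
    then have "(\<Sum>i\<in>S. fk k (x i)) = real k / (real k - 1) * (\<Sum>i\<in>S. x i)"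
      by (simp add: sum_distrib_left)
    also have "\<dots> \<le> real k / (real k - 1) * (1 / real (tseq (mk k + 1)))"
      using sm k2 by (intro mult_left_mono) auto
    finally show "(\<Sum>i\<in>S. fk k (x i)) \<le> Bj k (mk k + 1)" unfolding Bj_def by (simp add: ac_simps)
  qed
next
  case (step n)
  have mp: "1 \<le> mk k \<and> tseq (mk k) < k \<and> k \<le> tseq (mk k + 1)" using mk_props[OF k2] .
  have nm: "n \<le> mk k" using step.hyps by simp
  define t where "t = tseq n"
  have t1: "1 \<le> t" unfolding t_def using tseq_pos step.prems by simp
  have tk: "t < k" unfolding t_def using tseq_mono[OF nm] mp by simp
  have tS: "tseq (Suc n) = t * (t + 1)" unfolding t_def using tseq_Suc step.prems by simp
  note IH = step.IH[OF le_SucI[OF step.prems]]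
  have Bs: "Bj k n = 1 / real t + Bj k (Suc n)" unfolding t_def using Bj_split step.prems nm by simp
  have Bge: "1 / real (tseq (Suc n)) \<le> Bj k (Suc n)" using Bj_ge k2 step.hyps by simp
  have rt: "1 / real t - 1 / real (t + 1) = 1 / real (tseq (Suc n))"
  proof -
    have tp: "real t > 0" using t1 by simp
    then show ?thesis unfolding tS by (simp add: field_simps)
  qed
  show ?case
  proof (intro allI impI)
    fix S :: "'i set" and x assume fin: "finite S" and nn: "\<forall>i\<in>S. 0 \<le> x i"
      and sm: "(\<Sum>i\<in>S. x i) \<le> 1 / real (tseq n)"
    have le_sum: "\<And>i. i \<in> S \<Longrightarrow> x i \<le> 1 / real t"
    proof -
      fix i assume i: "i \<in> S"
      have "x i \<le> (\<Sum>i\<in>S. x i)" using fin nn i by (intro member_le_sum) auto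
      then show "x i \<le> 1 / real t" using sm unfolding t_def by linarith
    qed
    show "(\<Sum>i\<in>S. fk k (x i)) \<le> Bj k n"
    proof (cases "\<exists>i0\<in>S. 1 / real (t+1) < x i0")
      case True
      then obtain i0 where i0: "i0 \<in> S" "1 / real (t+1) < x i0" by blast
      have f0: "fk k (x i0) = 1 / real t" using fk_class[OF t1 tk i0(2) le_sum[OF i0(1)]] .
      have rest: "(\<Sum>i\<in>S - {i0}. x i) \<le> 1 / real (tseq (Suc n))"
        using sum.remove[OF fin i0(1), of x] sm i0(2) rt unfolding t_def by linarith
      have "(\<Sum>i\<in>S - {i0}. fk k (x i)) \<le> Bj k (Suc n)"
        using IH fin nn rest by simp
      then show ?thesis using sum.remove[OF fin i0(1), of "\<lambda>i. fk k (x i)"] f0 Bs by simp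
    next
      case False
      then have small: "\<forall>i\<in>S. x i \<le> 1 / real (t+1)" by auto
      show ?thesis
      proof (cases "t + 1 < k")
        case True
        have "\<forall>i\<in>S. fk k (x i) \<le> (real (t+1) + 1) / real (t+1) * x i"
          using fk_ratio[OF k2 _ True] small nn t1 by simp
        then have "(\<Sum>i\<in>S. fk k (x i)) \<le> (\<Sum>i\<in>S. (real (t+1) + 1) / real (t+1) * x i)"
          by (intro sum_mono) auto
        also have "\<dots> = (real (t+1) + 1) / real (t+1) * (\<Sum>i\<in>S. x i)" by (simp add: sum_distrib_left)
        also have "\<dots> \<le> (real (t+1) + 1) / real (t+1) * (1 / real t)"
          using sm unfolding t_def by (intro mult_left_mono) auto
        also have "\<dots> = 1 / real t + 1 / real (tseq (Suc n))"
        proof -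
          have tp: "real t > 0" using t1 by simp
          have e: "real (t * (t + 1)) = real t * (real t + 1)" by (simp add: algebra_simps)
          show ?thesis unfolding tS e using l1[OF tp] by (simp add: add.commute)
        qed
        finally show ?thesis using Bs Bge by linarith
      next
        case False
        then have kt: "k = t + 1" using tk by simp
        have "\<not> Suc n \<le> mk k"
        proof
          assume "Suc n \<le> mk k"
          then have "tseq (Suc n) \<le> tseq (mk k)" by (rule tseq_mono)
          moreover have "tseq (Suc n) \<ge> k" unfolding tS kt using t1 by simp
          ultimately show False using mp by simp
        qed
        then have nmk: "n = mk k" using nm by simp
        have Bn: "Bj k n = 1 / real t + 1 / real (t * (t+1)) * (real k / (real k - 1))"
          using Bs nmk tS unfolding Bj_def by simp
        have "\<forall>i\<in>S. fk k (x i) = real k / (real k - 1) * x i"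
          using fk_small small nn kt by simp
        then have "(\<Sum>i\<in>S. fk k (x i)) = real k / (real k - 1) * (\<Sum>i\<in>S. x i)"
          by (simp add: sum_distrib_left)
        also have "\<dots> \<le> real k / (real k - 1) * (1 / real t)"
          using sm k2 unfolding t_def by (intro mult_left_mono) auto
        also have "\<dots> = 1 / real t + 1 / real (t * (t+1)) * (real k / (real k - 1))"
        proof -
          have tp: "real t > 0" using t1 by simp
          have e: "real (t * (t + 1)) = real t * (real t + 1)" by (simp add: algebra_simps)
          have kk: "real k - 1 = real t" "real k = real t + 1" using kt by simp_all
          show ?thesis unfolding e kk using l2[OF tp] by simp
        qed
        finally show ?thesis using Bn by simp
      qed
    qed
  qed
qed

lemma harm:
  fixes S :: "'i set"
  assumes "k \<ge> 2" "finite S" "\<forall>i\<in>S. 0 \<le> x i" "(\<Sum>i\<in>S. x i) \<le> 1"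
  shows "(\<Sum>i\<in>S. fk k (x i)) \<le> Tk k"
proof -
  have "1 \<le> mk k" using mk_props[OF assms(1)] by simp
  then have H: "\<forall>(S::'i set) x. finite S \<longrightarrow> (\<forall>i\<in>S. 0 \<le> x i) \<longrightarrow> (\<Sum>i\<in>S. x i) \<le> 1
          \<longrightarrow> (\<Sum>i\<in>S. fk k (x i)) \<le> Bj k 1"
    using harm_j[OF assms(1), of 1] by simp
  show ?thesis unfolding Tk_Bj using H assms(2-4) by blast
qed

lemma disj_len:
  fixes S :: "'i set" and a b :: "'i \<Rightarrow> real" and A B :: real
  assumes fin: "finite S" and rng: "\<forall>i\<in>S. A \<le> a i \<and> a i \<le> b i \<and> b i \<le> B"
    and dj: "\<forall>i\<in>S. \<forall>j\<in>S. i \<noteq> j \<longrightarrow> b i \<le> a j \<or> b j \<le> a i" and AB: "A \<le> B"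
  shows "(\<Sum>i\<in>S. b i - a i) \<le> B - A"
proof -
  have "(\<Sum>i\<in>S. (\<lambda>_. 1::real) i * ((\<lambda>x. - x) (a i) - (\<lambda>x. - x) (b i))) \<le> 1 * ((\<lambda>x. - x) A - (\<lambda>x. - x) B)"
  proof (rule seg[OF fin _ rng _ _ AB])
    show "\<forall>i\<in>S. 0 \<le> (1::real)" by simp
    show "\<forall>x y. A \<le> x \<longrightarrow> x \<le> y \<longrightarrow> y \<le> B \<longrightarrow> - y \<le> - x" by simp
    show "\<forall>x. A < x \<longrightarrow> x < B \<longrightarrow> (\<Sum>i\<in>{i\<in>S. a i < x \<and> x < b i}. (1::real)) \<le> 1"
    proof (intro allI impI)
      fix x assume "A < x" "x < B"
      have f: "finite {i\<in>S. a i < x \<and> x < b i}" using fin by simp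
      have "card {i\<in>S. a i < x \<and> x < b i} \<le> Suc 0"
        unfolding card_le_Suc0_iff_eq[OF f]
      proof (intro ballI)
        fix i j assume i: "i \<in> {i\<in>S. a i < x \<and> x < b i}" and j: "j \<in> {i\<in>S. a i < x \<and> x < b i}"
        show "i = j"
        proof (rule ccontr)
          assume ij: "i \<noteq> j"
          have xi: "a i < x" "x < b i" "a j < x" "x < b j" "i \<in> S" "j \<in> S" using i j by auto
          have "b i \<le> a j \<or> b j \<le> a i" using dj xi(5,6) ij by blast
          then show False using xi by linarith
        qed
      qed
      then show "(\<Sum>i\<in>{i\<in>S. a i < x \<and> x < b i}. (1::real)) \<le> 1" by simp
    qed
  qed
  then show ?thesis by simp
qed

lemma frac:
  fixes I :: "'i set"
  assumes k2: "k \<ge> 2" and fin: "finite I"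
    and rng: "\<forall>i\<in>I. 0 \<le> a i \<and> a i \<le> b i \<and> b i \<le> 1"
    and cnn: "\<forall>i\<in>I. 0 \<le> c i"
    and load: "\<forall>x. 0 < x \<longrightarrow> x < 1 \<longrightarrow> (\<Sum>i\<in>{i\<in>I. a i < x \<and> x < b i}. c i) \<le> 1"
  shows "(\<Sum>i\<in>I. c i * fk k (b i - a i)) \<le> Tk k"
proof -
  define adm where "adm x = {S. S \<subseteq> I \<and> (\<forall>i\<in>S. \<forall>j\<in>S. i \<noteq> j \<longrightarrow> b i \<le> a j \<or> b j \<le> a i) \<and> (\<forall>i\<in>S. x \<le> a i)}" for x
  define val where "val S = (\<Sum>i\<in>S. fk k (b i - a i))" for S
  define Dp where "Dp x = Max (val ` adm x)" for x
  have finadm: "finite (adm x)" for x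
  proof -
    have "adm x \<subseteq> Pow I" unfolding adm_def by auto
    then show ?thesis using fin by (meson finite_Pow_iff finite_subset)
  qed
  have emp: "{} \<in> adm x" for x unfolding adm_def by simp
  have ne: "val ` adm x \<noteq> {}" for x using emp by blast
  have Dge: "val S \<le> Dp x" if "S \<in> adm x" for S x
    unfolding Dp_def using finadm that by (intro Max_ge) auto
  have Dmono: "Dp y \<le> Dp x" if "x \<le> y" for x y
  proof -
    have "adm y \<subseteq> adm x" unfolding adm_def using that by auto
    then show ?thesis unfolding Dp_def using ne finadm by (intro Max_mono) auto
  qed
  have Dstep: "fk k (b i - a i) \<le> Dp (a i) - Dp (b i)" if i: "i \<in> I" for i
  proof (cases "a i = b i")
    case True
    then show ?thesis using fk_zero by simp
  next
    case False
    then have ab: "a i < b i" using rng i by force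
    obtain S where S: "S \<in> adm (b i)" "Dp (b i) = val S"
      unfolding Dp_def using Max_in[OF finite_imageI[OF finadm] ne] by auto
    have iS: "i \<notin> S" using S(1) ab unfolding adm_def by auto
    have S1: "S \<subseteq> I" "\<forall>i\<in>S. \<forall>j\<in>S. i \<noteq> j \<longrightarrow> b i \<le> a j \<or> b j \<le> a i"
      "\<forall>j\<in>S. b i \<le> a j" using S(1) unfolding adm_def by auto
    have "insert i S \<in> adm (a i)"
      unfolding adm_def
    proof (intro CollectI conjI ballI impI)
      show "insert i S \<subseteq> I" using S1 i by auto
      fix u v assume u: "u \<in> insert i S" and v: "v \<in> insert i S" and uv: "u \<noteq> v"
      show "b u \<le> a v \<or> b v \<le> a u"
      proof (cases "u = i")
        case True then show ?thesis using v uv S1 by auto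
      next
        case False
        show ?thesis
        proof (cases "v = i")
          case True then show ?thesis using u False S1 by auto
        next
          case False then show ?thesis using u v uv \<open>u \<noteq> i\<close> S1 by auto
        qed
      qed
    next
      fix u assume u: "u \<in> insert i S"
      show "a i \<le> a u" using u S1 ab by (auto intro: order_trans[of _ "b i"])
    qed
    then have "val (insert i S) \<le> Dp (a i)" by (rule Dge)
    moreover have "val (insert i S) = fk k (b i - a i) + val S"
    proof -
      have "finite S" using S1(1) fin by (rule finite_subset)
      then show ?thesis unfolding val_def using iS by simp
    qed
    ultimately show ?thesis using S(2) by simp
  qed
  have D0: "Dp 0 \<le> Tk k"
    unfolding Dp_def
  proof (rule Max.boundedI[OF finite_imageI[OF finadm] ne])
    fix v assume "v \<in> val ` adm 0"
    then obtain S where S: "S \<in> adm 0" "v = val S" by auto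
    have finS: "finite S" using S(1) fin unfolding adm_def by (auto simp: finite_subset)
    have "(\<Sum>i\<in>S. b i - a i) \<le> 1 - 0"
      using S(1) rng unfolding adm_def by (intro disj_len[OF finS]) auto
    moreover have "\<forall>i\<in>S. 0 \<le> b i - a i" using S(1) rng unfolding adm_def by auto
    ultimately show "v \<le> Tk k" using harm[OF k2 finS, of "\<lambda>i. b i - a i"] S(2) unfolding val_def by simp
  qed
  have D1: "0 \<le> Dp 1" using Dge[OF emp] unfolding val_def by simp
  have "(\<Sum>i\<in>I. c i * (Dp (a i) - Dp (b i))) \<le> 1 * (Dp 0 - Dp 1)"
    using seg[OF fin cnn rng _ load] Dmono by simp
  moreover have "(\<Sum>i\<in>I. c i * fk k (b i - a i)) \<le> (\<Sum>i\<in>I. c i * (Dp (a i) - Dp (b i)))"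
    using Dstep cnn by (intro sum_mono mult_left_mono) auto
  ultimately show ?thesis using D0 D1 by simp
qed

locale gsetup =
  fixes p :: nat and s \<pi> :: "nat \<Rightarrow> real"
  assumes p1: "p \<ge> 1"
    and srng: "\<forall>j\<in>{1..p}. 0 < s j \<and> s j \<le> 1"
    and sdec: "\<forall>j\<in>{1..<p}. s (j+1) < s j"
    and df: "dual_feasible p s \<pi>"
begin

lemma sext_step: "j \<le> p \<Longrightarrow> sext p s (Suc j) \<le> sext p s j"
proof -
  assume j: "j \<le> p"
  consider "j = 0" | "1 \<le> j \<and> j < p" | "j = p \<and> 1 \<le> j" using j by linarith
  then show ?thesis
  proof cases
    case 1 then show ?thesis using srng p1 unfolding sext_def by auto
  next
    case 2 then have "s (j+1) < s j" using sdec by auto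
    then show ?thesis using 2 unfolding sext_def by auto
  next
    case 3 then have "0 < s j" using srng by auto
    then show ?thesis using 3 unfolding sext_def by auto
  qed
qed

lemma sext_anti: "i \<le> j \<Longrightarrow> j \<le> p + 1 \<Longrightarrow> sext p s j \<le> sext p s i"
proof (induction j rule: dec_induct)
  case base then show ?case by simp
next
  case (step n)
  then have "sext p s (Suc n) \<le> sext p s n" using sext_step by simp
  then show ?case using step by simp
qed

lemma pi_nn: "j \<in> {1..p} \<Longrightarrow> 0 \<le> \<pi> j"
  using df unfolding dual_feasible_def by auto

lemma g_cases:
  assumes w: "0 \<le> w" "w \<le> 1"
  shows "gfun p s \<pi> w = 0 \<or> (\<exists>j\<in>{1..p}. s j \<le> w \<and> gfun p s \<pi> w = \<pi> j)"
proof (cases "w = 0 \<or> w = 1")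
  case True
  then show ?thesis
  proof
    assume "w = 0" then show ?thesis unfolding gfun_def by simp
  next
    assume w1: "w = 1"
    have "1 \<in> {1..p}" using p1 by simp
    moreover have "s 1 \<le> w" using srng p1 w1 by auto
    ultimately show ?thesis unfolding gfun_def using w1 by auto
  qed
next
  case False
  then have w0: "w \<noteq> 0" "w \<noteq> 1" by auto
  then have wlt: "0 < w" "w < 1" using w by auto
  define j0 where "j0 = (LEAST j. sext p s j \<le> w)"
  have ex: "sext p s (p+1) \<le> w" unfolding sext_def using wlt by simp
  have j0a: "sext p s j0 \<le> w" unfolding j0_def by (rule LeastI[of "\<lambda>j. sext p s j \<le> w", OF ex])
  have j0b: "j0 \<le> p + 1" unfolding j0_def by (rule Least_le[of "\<lambda>j. sext p s j \<le> w", OF ex])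
  have j0c: "j0 \<noteq> 0" proof assume "j0 = 0" then show False using j0a wlt unfolding sext_def by simp qed
  have j0d: "w < sext p s (j0 - 1)"
  proof -
    have "j0 - 1 < j0" using j0c by simp
    then have "\<not> sext p s (j0 - 1) \<le> w" unfolding j0_def by (rule not_less_Least)
    then show ?thesis by simp
  qed
  have the: "(THE j. 1 \<le> j \<and> j \<le> p + 1 \<and> sext p s j \<le> w \<and> w < sext p s (j - 1)) = j0"
  proof (rule the_equality)
    show "1 \<le> j0 \<and> j0 \<le> p + 1 \<and> sext p s j0 \<le> w \<and> w < sext p s (j0 - 1)"
      using j0a j0b j0c j0d by simp
    fix j assume j: "1 \<le> j \<and> j \<le> p + 1 \<and> sext p s j \<le> w \<and> w < sext p s (j - 1)"
    show "j = j0"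
    proof (rule ccontr)
      assume "j \<noteq> j0"
      then consider "j < j0" | "j0 < j" by linarith
      then show False
      proof cases
        case 1
        then have "sext p s (j0 - 1) \<le> sext p s j" using j0b by (intro sext_anti) auto
        then show False using j j0d by linarith
      next
        case 2
        then have "sext p s (j - 1) \<le> sext p s j0" using j by (intro sext_anti) auto
        then show False using j j0a by linarith
      qed
    qed
  qed
  have g: "gfun p s \<pi> w = piext p \<pi> j0" unfolding gfun_def using w0 the by simp
  show ?thesis
  proof (cases "j0 \<le> p")
    case True
    then have "s j0 \<le> w" using j0a j0c unfolding sext_def by auto
    then show ?thesis using g True j0c unfolding piext_def by auto
  next
    case False
    then show ?thesis using g unfolding piext_def by auto
  qed
qed

lemma g_nn: "0 \<le> w \<Longrightarrow> w \<le> 1 \<Longrightarrow> 0 \<le> gfun p s \<pi> w"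
  using g_cases pi_nn by fastforce

lemma gsum:
  fixes K :: "'i set" and w :: "'i \<Rightarrow> real"
  assumes fin: "finite K" and wr: "\<forall>i\<in>K. 0 \<le> w i \<and> w i \<le> 1" and ws: "(\<Sum>i\<in>K. w i) \<le> 1"
  shows "(\<Sum>i\<in>K. gfun p s \<pi> (w i)) \<le> 1"
proof -
  define K' where "K' = {i\<in>K. gfun p s \<pi> (w i) \<noteq> 0}"
  define J where "J i = (SOME j. j\<in>{1..p} \<and> s j \<le> w i \<and> gfun p s \<pi> (w i) = \<pi> j)" for i
  have JP: "J i \<in> {1..p} \<and> s (J i) \<le> w i \<and> gfun p s \<pi> (w i) = \<pi> (J i)" if i: "i \<in> K'" for i
  proof -
    have "\<exists>j. j\<in>{1..p} \<and> s j \<le> w i \<and> gfun p s \<pi> (w i) = \<pi> j"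
      using g_cases[of "w i"] wr i unfolding K'_def by auto
    then show ?thesis unfolding J_def by (rule someI_ex)
  qed
  have finK': "finite K'" using fin unfolding K'_def by simp
  have K'K: "K' \<subseteq> K" unfolding K'_def by auto
  define v where "v j = card {i\<in>K'. J i = j}" for j
  have img: "J ` K' \<subseteq> {1..p}" using JP by auto
  have e1: "(\<Sum>i\<in>K. gfun p s \<pi> (w i)) = (\<Sum>i\<in>K'. \<pi> (J i))"
  proof -
    have "(\<Sum>i\<in>K. gfun p s \<pi> (w i)) = (\<Sum>i\<in>K'. gfun p s \<pi> (w i))"
      using K'K fin by (intro sum.mono_neutral_right) (auto simp: K'_def)
    also have "\<dots> = (\<Sum>i\<in>K'. \<pi> (J i))" using JP by (intro sum.cong) auto
    finally show ?thesis .
  qed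
  have grp: "(\<Sum>i\<in>K'. f (J i)) = (\<Sum>j=1..p. real (v j) * f j)" for f :: "nat \<Rightarrow> real"
  proof -
    have "(\<Sum>i\<in>K'. f (J i)) = (\<Sum>j=1..p. \<Sum>i\<in>{x. x \<in> K' \<and> J x = j}. f (J i))"
      using sum.group[OF finK' _ img, of "\<lambda>i. f (J i)"] by simp
    also have "\<dots> = (\<Sum>j=1..p. real (v j) * f j)"
    proof (rule sum.cong)
      fix j assume "j \<in> {1..p}"
      have "(\<Sum>i\<in>{x. x \<in> K' \<and> J x = j}. f (J i)) = (\<Sum>i\<in>{x. x \<in> K' \<and> J x = j}. f j)"
        by (intro sum.cong) auto
      then show "(\<Sum>i\<in>{x. x \<in> K' \<and> J x = j}. f (J i)) = real (v j) * f j"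
        unfolding v_def by simp
    qed simp
    finally show ?thesis .
  qed
  have "(\<Sum>j=1..p. real (v j) * s j) = (\<Sum>i\<in>K'. s (J i))" using grp by simp
  also have "\<dots> \<le> (\<Sum>i\<in>K'. w i)" using JP by (intro sum_mono) auto
  also have "\<dots> \<le> (\<Sum>i\<in>K. w i)" using K'K fin wr by (intro sum_mono2) auto
  finally have "(\<Sum>j=1..p. real (v j) * s j) \<le> 1" using ws by simp
  then have "(\<Sum>j=1..p. real (v j) * \<pi> j) \<le> 1" using df unfolding dual_feasible_def by blast
  then show ?thesis using e1 grp by simp
qed

end

lemma pack_bound:
  fixes k p :: nat and s \<pi> :: "nat \<Rightarrow> real" and L :: "box list"
  assumes gs: "gsetup p s \<pi>" and k2: "k \<ge> 2"
    and br: "\<forall>R\<in>set L. 0 \<le> blen R \<and> blen R \<le> 1 \<and> 0 \<le> bwid R \<and> bwid R \<le> 1 \<and> 0 \<le> bhgt R \<and> bhgt R \<le> 1"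
    and pk: "is_packing L pos"
    and hb: "\<forall>i<length L. snd (snd (pos i)) + bhgt (L!i) \<le> H"
    and H0: "0 \<le> H"
  shows "Wt k p s \<pi> L \<le> Tk k * H"
proof -
  define n where "n = length L"
  define l where "l i = blen (L!i)" for i
  define w where "w i = bwid (L!i)" for i
  define h where "h i = bhgt (L!i)" for i
  define X where "X i = fst (pos i)" for i
  define Y where "Y i = fst (snd (pos i))" for i
  define Z where "Z i = snd (snd (pos i))" for i
  define g where "g = gfun p s \<pi>"
  have bx: "0 \<le> l i \<and> l i \<le> 1 \<and> 0 \<le> w i \<and> w i \<le> 1 \<and> 0 \<le> h i \<and> h i \<le> 1" if "i < n" for i
    using br nth_mem[of i L] that unfolding n_def l_def w_def h_def by blast
  have R1: "0 \<le> X i \<and> X i + l i \<le> 1 \<and> 0 \<le> Y i \<and> Y i + w i \<le> 1 \<and> 0 \<le> Z i" if "i < n" for i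
    using pk that unfolding is_packing_def n_def X_def Y_def Z_def l_def w_def by blast
  have R2: "X i + l i \<le> X j \<or> X j + l j \<le> X i \<or> Y i + w i \<le> Y j \<or> Y j + w j \<le> Y i \<or>
            Z i + h i \<le> Z j \<or> Z j + h j \<le> Z i" if "i < n" "j < n" "i \<noteq> j" for i j
    using pk that unfolding is_packing_def n_def X_def Y_def Z_def l_def w_def h_def by blast
  have hb': "Z i + h i \<le> H" if "i < n" for i using hb that unfolding n_def Z_def h_def by blast
  have gnn: "0 \<le> g (w i)" if "i < n" for i
    using gsetup.g_nn[OF gs] bx[OF that] unfolding g_def by blast
  have Wt_eq: "Wt k p s \<pi> L = (\<Sum>i\<in>{0..<n}. (fk k (l i) * g (w i)) * h i)"
    unfolding Wt_def sum_list_sum_nth n_def l_def w_def h_def g_def by simp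
  have load_z: "(\<Sum>i\<in>{i\<in>{0..<n}. Z i < z \<and> z < Z i + h i}. fk k (l i) * g (w i)) \<le> Tk k"
    if z: "0 < z" "z < H" for z
  proof -
    define Jz where "Jz = {i\<in>{0..<n}. Z i < z \<and> z < Z i + h i}"
    have finJ: "finite Jz" unfolding Jz_def by simp
    have Jn: "i < n" if "i \<in> Jz" for i using that unfolding Jz_def by auto
    have "(\<Sum>i\<in>Jz. g (w i) * fk k ((X i + l i) - X i)) \<le> Tk k"
    proof (rule frac[OF k2 finJ])
      show "\<forall>i\<in>Jz. 0 \<le> X i \<and> X i \<le> X i + l i \<and> X i + l i \<le> 1" using R1 bx Jn by fastforce
      show "\<forall>i\<in>Jz. 0 \<le> g (w i)" using gnn Jn by blast
      show "\<forall>x. 0 < x \<longrightarrow> x < 1 \<longrightarrow> (\<Sum>i\<in>{i\<in>Jz. X i < x \<and> x < X i + l i}. g (w i)) \<le> 1"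
      proof (intro allI impI)
        fix x :: real assume x: "0 < x" "x < 1"
        define Kx where "Kx = {i\<in>Jz. X i < x \<and> x < X i + l i}"
        have finK: "finite Kx" unfolding Kx_def using finJ by simp
        have Kn: "i < n" if "i \<in> Kx" for i using that Jn unfolding Kx_def by auto
        have dj: "\<forall>i\<in>Kx. \<forall>j\<in>Kx. i \<noteq> j \<longrightarrow> Y i + w i \<le> Y j \<or> Y j + w j \<le> Y i"
        proof (intro ballI impI)
          fix i j assume i: "i \<in> Kx" and j: "j \<in> Kx" and ij: "i \<noteq> j"
          have ii: "X i < x" "x < X i + l i" "Z i < z" "z < Z i + h i" using i unfolding Kx_def Jz_def by auto
          have jj: "X j < x" "x < X j + l j" "Z j < z" "z < Z j + h j" using j unfolding Kx_def Jz_def by auto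
          show "Y i + w i \<le> Y j \<or> Y j + w j \<le> Y i"
            using R2[OF Kn[OF i] Kn[OF j] ij] ii jj by linarith
        qed
        have "(\<Sum>i\<in>Kx. (Y i + w i) - Y i) \<le> 1 - 0"
          using R1 bx Kn by (intro disj_len[OF finK _ dj]) fastforce+
        then have ws: "(\<Sum>i\<in>Kx. w i) \<le> 1" by simp
        have "(\<Sum>i\<in>Kx. gfun p s \<pi> (w i)) \<le> 1"
          using gsetup.gsum[OF gs finK _ ws] bx Kn by blast
        then show "(\<Sum>i\<in>{i\<in>Jz. X i < x \<and> x < X i + l i}. g (w i)) \<le> 1"
          unfolding Kx_def g_def by simp
      qed
    qed
    then show ?thesis unfolding Jz_def by (simp add: mult.commute)
  qed
  have s2: "\<forall>i\<in>{0..<n}. 0 \<le> fk k (l i) * g (w i)"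
    using fk_nonneg[OF k2] bx gnn by (simp add: mult_nonneg_nonneg)
  have s3: "\<forall>i\<in>{0..<n}. 0 \<le> Z i \<and> Z i \<le> Z i + h i \<and> Z i + h i \<le> H"
    using R1 bx hb' by simp
  have s4: "\<forall>x y. 0 \<le> x \<longrightarrow> x \<le> y \<longrightarrow> y \<le> H \<longrightarrow> (\<lambda>x. - x) y \<le> (\<lambda>x. - x) (x::real)" by simp
  have s5: "\<forall>x. 0 < x \<longrightarrow> x < H \<longrightarrow> (\<Sum>i\<in>{i\<in>{0..<n}. Z i < x \<and> x < Z i + h i}. fk k (l i) * g (w i)) \<le> Tk k"
    using load_z by blast
  from seg[OF finite_atLeastLessThan s2 s3 s4 s5 H0]
  have "(\<Sum>i\<in>{0..<n}. (fk k (l i) * g (w i)) * h i) \<le> Tk k * H" by simp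
  then show ?thesis unfolding Wt_eq by simp
qed

lemma stack_packing:
  assumes br: "\<forall>R\<in>set L. 0 \<le> blen R \<and> blen R \<le> 1 \<and> 0 \<le> bwid R \<and> bwid R \<le> 1 \<and> 0 \<le> bhgt R \<and> bhgt R \<le> 1"
  shows "(\<Sum>j<length L. bhgt (L!j)) \<in> {H. 0 \<le> H \<and> (\<exists>pos. is_packing L pos \<and>
                  (\<forall>i<length L. snd (snd (pos i)) + bhgt (L!i) \<le> H))}"
proof -
  define n where "n = length L"
  define h where "h j = bhgt (L!j)" for j
  have hnn: "0 \<le> h j" if "j < n" for j using br nth_mem[of j L] that unfolding h_def n_def by blast
  define pos where "pos i = (0::real, 0::real, \<Sum>j<i. h j)" for i
  have pre: "(\<Sum>j<i. h j) + h i \<le> (\<Sum>j<m. h j)" if "i < m" "m \<le> n" for i m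
  proof -
    have "(\<Sum>j<i. h j) + h i = (\<Sum>j<Suc i. h j)" by simp
    also have "\<dots> \<le> (\<Sum>j<m. h j)" using that hnn by (intro sum_mono2) auto
    finally show ?thesis .
  qed
  have snn: "0 \<le> (\<Sum>j<i. h j)" if "i \<le> n" for i using hnn that by (intro sum_nonneg) auto
  have pk: "is_packing L pos"
    unfolding is_packing_def
  proof (intro conjI allI impI)
    fix i assume i: "i < length L"
    then have "L!i \<in> set L" by simp
    then show "0 \<le> fst (pos i)" "fst (pos i) + blen (L!i) \<le> 1" "0 \<le> fst (snd (pos i))"
      "fst (snd (pos i)) + bwid (L!i) \<le> 1" "0 \<le> snd (snd (pos i))"
      using br snn[of i] i unfolding pos_def n_def by auto
  next
    fix i j assume i: "i < length L" and j: "j < length L" and ij: "i \<noteq> j"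
    show "fst (pos i) + blen (L!i) \<le> fst (pos j) \<or> fst (pos j) + blen (L!j) \<le> fst (pos i) \<or>
        fst (snd (pos i)) + bwid (L!i) \<le> fst (snd (pos j)) \<or>
        fst (snd (pos j)) + bwid (L!j) \<le> fst (snd (pos i)) \<or>
        snd (snd (pos i)) + bhgt (L!i) \<le> snd (snd (pos j)) \<or>
        snd (snd (pos j)) + bhgt (L!j) \<le> snd (snd (pos i))"
    proof (cases "i < j")
      case True
      then have "(\<Sum>j<i. h j) + h i \<le> (\<Sum>j'<j. h j')" using pre j unfolding n_def by simp
      then show ?thesis unfolding pos_def h_def by simp
    next
      case False
      then have "j < i" using ij by simp
      then have "(\<Sum>j'<j. h j') + h j \<le> (\<Sum>j<i. h j)" using pre i unfolding n_def by simp
      then show ?thesis unfolding pos_def h_def by simp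
    qed
  qed
  have "\<forall>i<length L. snd (snd (pos i)) + bhgt (L!i) \<le> (\<Sum>j<length L. bhgt (L!j))"
    using pre unfolding pos_def h_def n_def by simp
  moreover have "0 \<le> (\<Sum>j<length L. bhgt (L!j))" using snn[of n] unfolding h_def n_def by simp
  ultimately show ?thesis using pk by blast
qed

theorem lemma7:
  fixes k p :: nat and s \<pi> :: "nat \<Rightarrow> real" and L :: "box list"
  assumes "k \<ge> 2"
    and "p \<ge> 1"
    and "\<forall>j\<in>{1..p}. 0 < s j \<and> s j \<le> 1"
    and "\<forall>j\<in>{1..<p}. s (j+1) < s j"
    and "dual_feasible p s \<pi>"
    and "\<forall>j\<in>{1..<p}. \<pi> (j+1) \<le> \<pi> j"
    and "\<forall>R\<in>set L. 0 \<le> blen R \<and> blen R \<le> 1 \<and> 0 \<le> bwid R \<and> bwid R \<le> 1 \<and> 0 \<le> bhgt R \<and> bhgt R \<le> 1"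
  shows "Wt k p s \<pi> L \<le> Tk k * OPT L"
proof -
  have gs: "gsetup p s \<pi>" using assms(2-5) by unfold_locales
  define SS where "SS = {H. 0 \<le> H \<and> (\<exists>pos. is_packing L pos \<and>
                  (\<forall>i<length L. snd (snd (pos i)) + bhgt (L!i) \<le> H))}"
  have ne: "SS \<noteq> {}" using stack_packing[OF assms(7)] unfolding SS_def by blast
  have Tpos: "Tk k > 0"
  proof -
    have "1 / real (tseq 1) \<le> Bj k 1" using Bj_ge[of k 1] assms(1) by simp
    then show ?thesis unfolding Tk_Bj by simp
  qed
  have "Wt k p s \<pi> L / Tk k \<le> Inf SS"
  proof (rule cInf_greatest[OF ne])
    fix H assume "H \<in> SS"
    then obtain pos where "0 \<le> H" "is_packing L pos" "\<forall>i<length L. snd (snd (pos i)) + bhgt (L!i) \<le> H"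
      unfolding SS_def by blast
    then have "Wt k p s \<pi> L \<le> Tk k * H" using pack_bound[OF gs assms(1,7)] by blast
    then show "Wt k p s \<pi> L / Tk k \<le> H" using Tpos by (simp add: divide_simps mult.commute)
  qed
  then have "Wt k p s \<pi> L \<le> Tk k * Inf SS" using Tpos by (simp add: divide_simps mult.commute)
  then show ?thesis unfolding OPT_def SS_def .
qed

end
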